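(* Let $\mathcal M$ be a complete, connected Riemannian manifold, let $A=(a_{ij})\in\mathbb R^{N\times K}$ have unit row sums, let $f\in\mathcal M^N$ and $p\in[1,\infty)$. Then the data term $u\mapsto \mathrm{dist}(\mathcal A(u),f)^p=\sum_{i=1}^N\mathrm{dist}(\mathcal A(u)_i,f_i)^p$ is a lower semicontinuous function on $\mathcal M^K$.
   Context: $\mathrm{dist}$ denotes the Riemannian distance on $\mathcal M$. The entries $a_{ij}$ may be negative; only $\sum_j a_{ij}=1$ for each $i$ is assumed. For $u\in\mathcal M^K$, $\mathrm{mean}(a_{i,\cdot},u)=\operatorname{argmin}_{v\in\mathcal M}\sum_{j=1}^K a_{ij}\,\mathrm{dist}(v,u_j)^2$ (set of minimizers), and $\mathcal A(u)_i$ is the set of elements of $\mathrm{mean}(a_{i,\cdot},u)$ minimizing $\mathrm{dist}(\cdot,f_i)$ over $\mathrm{mean}(a_{i,\cdot},u)$; $\mathrm{dist}(\mathcal A(u)_i,f_i)$ denotes the common distance of these points to $f_i$. *)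

theory Defs
  imports "HOL-Analysis.Analysis"
begin

text \<open>The manifold M is modelled as a type 'm of class heine_borel (a proper,
hence complete, metric space; complete Riemannian manifolds are proper by
Hopf-Rinow).\<close>

definition wmean :: "real^'k::finite \<Rightarrow> ('m::metric_space)^'k \<Rightarrow> 'm set" where
  "wmean a u = {v. \<forall>w. (\<Sum>j\<in>UNIV. a$j * (dist v (u$j))\<^sup>2) \<le> (\<Sum>j\<in>UNIV. a$j * (dist w (u$j))\<^sup>2)}"

definition Aset :: "real^'k::finite^'n::finite \<Rightarrow> ('m::metric_space)^'n \<Rightarrow> 'm^'k \<Rightarrow> 'n \<Rightarrow> 'm set" where
  "Aset A f u i = {v \<in> wmean (A$i) u. \<forall>w\<in>wmean (A$i) u. dist v (f$i) \<le> dist w (f$i)}"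

text \<open>dist(A(u)_i, f_i): the common distance of the points of A(u)_i to f_i.\<close>
definition distA :: "real^'k::finite^'n::finite \<Rightarrow> ('m::metric_space)^'n \<Rightarrow> 'm^'k \<Rightarrow> 'n \<Rightarrow> real" where
  "distA A f u i = (INF v\<in>Aset A f u i. dist v (f$i))"

definition data_term :: "real^'k::finite^'n::finite \<Rightarrow> ('m::metric_space)^'n \<Rightarrow> real \<Rightarrow> 'm^'k \<Rightarrow> real" where
  "data_term A f p u = (\<Sum>i\<in>UNIV. (distA A f u i) powr p)"

definition lsc :: "('a::topological_space \<Rightarrow> real) \<Rightarrow> bool" where
  "lsc g \<longleftrightarrow> (\<forall>x c. c < g x \<longrightarrow> (\<forall>\<^sub>F y in nhds x. c < g y))"

end

theory Submission
  imports Defs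
begin

definition phi :: "real^'k::finite \<Rightarrow> ('m::metric_space)^'k \<Rightarrow> 'm \<Rightarrow> real" where
  "phi a u v = (\<Sum>j\<in>UNIV. a$j * (dist v (u$j))\<^sup>2)"

lemma wmean_phi: "wmean a u = {v. \<forall>w. phi a u v \<le> phi a u w}"
  unfolding wmean_def phi_def by simp

lemma term_bound:
  fixes r d c :: real
  assumes "0 \<le> r" "0 \<le> d" "0 \<le> c" "\<bar>d - r\<bar> \<le> c"
  shows "a * (d^2 - r^2) \<ge> - (\<bar>a\<bar> * (c * (2*r + c)))"
proof -
  have e: "d^2 - r^2 = (d - r) * (d + r)" by (simp add: power2_eq_square algebra_simps)
  have "\<bar>d^2 - r^2\<bar> = \<bar>d - r\<bar> * (d + r)" unfolding e abs_mult using assms by simp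
  also have "\<dots> \<le> c * (2*r + c)" using assms
    by (intro mult_mono) auto
  finally have h: "\<bar>d^2 - r^2\<bar> \<le> c * (2*r + c)" .
  have "- (a * (d^2 - r^2)) \<le> \<bar>a * (d^2 - r^2)\<bar>" by simp
  also have "\<dots> = \<bar>a\<bar> * \<bar>d^2 - r^2\<bar>" by (simp add: abs_mult)
  also have "\<dots> \<le> \<bar>a\<bar> * (c * (2*r + c))" using h by (intro mult_left_mono) auto
  finally show ?thesis by linarith
qed

lemma coerc:
  fixes a :: "real^'k::finite" and u :: "('m::metric_space)^'k"
  assumes "(\<Sum>j\<in>UNIV. a$j) = 1"
  shows "phi a u v \<ge> (dist v z)^2 - (\<Sum>j\<in>UNIV. \<bar>a$j\<bar> * (dist z (u$j) * (2*dist v z + dist z (u$j))))"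
proof -
  let ?r = "dist v z"
  have "phi a u v - ?r^2 = (\<Sum>j\<in>UNIV. a$j * ((dist v (u$j))^2 - ?r^2))"
    using assms by (simp add: phi_def sum_subtractf right_diff_distrib sum_distrib_right[symmetric])
  also have "\<dots> \<ge> (\<Sum>j\<in>UNIV. - (\<bar>a$j\<bar> * (dist z (u$j) * (2*?r + dist z (u$j)))))"
  proof (intro sum_mono term_bound)
    fix j
    show "\<bar>dist v (u $ j) - dist v z\<bar> \<le> dist z (u $ j)"
      using dist_triangle[of v "u$j" z] dist_triangle[of v z "u$j"] by (simp add: dist_commute)
  qed auto
  finally show ?thesis by (simp add: sum_negf)
qed

lemma bound:
  fixes a :: "real^'k::finite" and u :: "('m::metric_space)^'k"
  assumes "(\<Sum>j\<in>UNIV. a$j) = 1" and C: "\<And>j. dist z (u$j) \<le> C j"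
    and le: "phi a u v \<le> phi a u z"
  shows "dist v z \<le> 1 + 2 * (\<Sum>j\<in>UNIV. \<bar>a$j\<bar> * C j) + 2 * (\<Sum>j\<in>UNIV. \<bar>a$j\<bar> * (C j)^2)"
proof -
  let ?r = "dist v z"
  define B where "B = (\<Sum>j\<in>UNIV. \<bar>a$j\<bar> * C j)"
  define B' where "B' = (\<Sum>j\<in>UNIV. \<bar>a$j\<bar> * (C j)^2)"
  have c0: "0 \<le> C j" for j using C[of j] zero_le_dist[of z "u$j"] by linarith
  have "(\<Sum>j\<in>UNIV. \<bar>a$j\<bar> * (dist z (u$j) * (2*?r + dist z (u$j))))
      \<le> (\<Sum>j\<in>UNIV. \<bar>a$j\<bar> * (C j * (2*?r + C j)))"
    by (intro sum_mono mult_left_mono mult_mono add_mono C) (auto simp: c0)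
  also have "\<dots> = 2 * ?r * B + B'"
    by (simp add: B_def B'_def sum_distrib_left sum.distrib[symmetric] algebra_simps power2_eq_square)
  finally have h1: "(\<Sum>j\<in>UNIV. \<bar>a$j\<bar> * (dist z (u$j) * (2*?r + dist z (u$j)))) \<le> 2 * ?r * B + B'" .
  have "phi a u z = (\<Sum>j\<in>UNIV. a$j * (dist z (u$j))^2)" by (simp add: phi_def)
  also have "\<dots> \<le> (\<Sum>j\<in>UNIV. \<bar>a$j\<bar> * (C j)^2)"
  proof (intro sum_mono)
    fix j
    have "a$j * (dist z (u$j))^2 \<le> \<bar>a$j\<bar> * (dist z (u$j))^2" by (intro mult_right_mono) auto
    also have "\<dots> \<le> \<bar>a$j\<bar> * (C j)^2" by (intro mult_left_mono power_mono C) auto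
    finally show "a$j * (dist z (u$j))^2 \<le> \<bar>a$j\<bar> * (C j)^2" .
  qed
  finally have h2: "phi a u z \<le> B'" by (simp add: B'_def)
  have key: "?r^2 \<le> 2 * ?r * B + 2 * B'"
    using coerc[OF assms(1), where u=u and v=v and z=z] h1 h2 le by linarith
  have B0: "0 \<le> B" "0 \<le> B'" unfolding B_def B'_def by (auto intro!: sum_nonneg simp: c0)
  have "?r \<le> 1 + 2*B + 2*B'"
  proof (cases "?r \<le> 1")
    case True then show ?thesis using B0 by linarith
  next
    case False
    then have "2 * B' \<le> 2 * B' * ?r" using B0 by (simp add: mult_le_cancel_left1)
    then have "?r * ?r \<le> (2*B + 2*B') * ?r" using key by (simp add: power2_eq_square algebra_simps)
    then have "?r \<le> 2*B + 2*B'" using False by (metis mult_le_cancel_right not_le order.strict_trans zero_less_one)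
    then show ?thesis by linarith
  qed
  then show ?thesis by (simp add: B_def B'_def)
qed


lemma phi_cont: "continuous_on S (phi a u)"
  unfolding phi_def by (intro continuous_intros)

lemma phi_tendsto:
  fixes Y :: "nat \<Rightarrow> ('m::metric_space)^'k::finite"
  assumes "Y \<longlonglongrightarrow> y" "V \<longlonglongrightarrow> v"
  shows "(\<lambda>n. phi a (Y n) (V n)) \<longlonglongrightarrow> phi a y v"
  unfolding phi_def
  by (intro tendsto_intros assms tendsto_vec_nth)

lemma wmean_props:
  fixes a :: "real^'k::finite" and u :: "('m::heine_borel)^'k"
  assumes "(\<Sum>j\<in>UNIV. a$j) = 1"
  shows "compact (wmean a u) \<and> wmean a u \<noteq> {}"
proof -
  define z :: 'm where "z = undefined"
  define S where "S = {v. phi a u v \<le> phi a u z}"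
  define R where "R = 1 + 2 * (\<Sum>j\<in>UNIV. \<bar>a$j\<bar> * dist z (u$j)) + 2 * (\<Sum>j\<in>UNIV. \<bar>a$j\<bar> * (dist z (u$j))^2)"
  have Sb: "S \<subseteq> cball z R"
    unfolding S_def R_def using bound[OF assms, where z=z and u=u and C="\<lambda>j. dist z (u$j)"]
    by (auto simp: dist_commute)
  have Sc: "closed S" unfolding S_def
    by (intro closed_Collect_le phi_cont continuous_on_const)
  have "compact S" using Sb Sc compact_cball compact_Int_closed
    using bounded_subset[OF bounded_cball Sb] by (simp add: compact_eq_bounded_closed)
  moreover have "S \<noteq> {}" unfolding S_def by auto
  ultimately obtain m where m: "m \<in> S" "\<And>y. y \<in> S \<Longrightarrow> phi a u m \<le> phi a u y"
    using continuous_attains_inf[OF _ _ phi_cont] by metis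
  have mw: "m \<in> wmean a u"
  proof -
    have "phi a u m \<le> phi a u w" for w
    proof (cases "w \<in> S")
      case True then show ?thesis using m(2) by blast
    next
      case False then show ?thesis using m(1) unfolding S_def by auto
    qed
    then show ?thesis unfolding wmean_phi by blast
  qed
  have sub: "wmean a u \<subseteq> S" unfolding wmean_phi S_def by auto
  have cl: "closed (wmean a u)"
  proof -
    have "wmean a u = (\<Inter>w. {v. phi a u v \<le> phi a u w})" unfolding wmean_phi by auto
    moreover have "closed (\<Inter>w. {v. phi a u v \<le> phi a u w})"
      by (intro closed_INT ballI closed_Collect_le phi_cont continuous_on_const)
    ultimately show ?thesis by simp
  qed
  have "compact (wmean a u)"
    using compact_Int_closed[OF \<open>compact S\<close> cl] sub by (simp add: Int_absorb1)
  then show ?thesis using mw by auto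
qed

lemma Aset_ne:
  fixes A :: "real^'k::finite^'n::finite" and f :: "('m::heine_borel)^'n"
  assumes "(\<Sum>j\<in>UNIV. A$i$j) = 1"
  shows "\<exists>w. w \<in> Aset A f u i"
proof -
  have "compact (wmean (A$i) u)" "wmean (A$i) u \<noteq> {}" using wmean_props[OF assms] by auto
  moreover have "continuous_on (wmean (A$i) u) (\<lambda>v. dist v (f$i))" by (intro continuous_intros)
  ultimately obtain w where "w \<in> wmean (A$i) u" "\<And>y. y \<in> wmean (A$i) u \<Longrightarrow> dist w (f$i) \<le> dist y (f$i)"
    using continuous_attains_inf[of "wmean (A$i) u" "\<lambda>v. dist v (f$i)"] by blast
  then show ?thesis unfolding Aset_def by auto
qed

lemma distA_eq:
  assumes "w \<in> Aset A f u i"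
  shows "distA A f u i = dist w (f$i)"
proof -
  have "(\<lambda>v. dist v (f$i)) ` Aset A f u i = {dist w (f$i)}"
    using assms unfolding Aset_def by (auto intro!: antisym)
  then show ?thesis unfolding distA_def by simp
qed


lemma lsc_distA:
  fixes A :: "real^'k::finite^'n::finite" and f :: "('m::heine_borel)^'n"
  assumes sA: "(\<Sum>j\<in>UNIV. A$i$j) = 1"
  shows "lsc (\<lambda>u. distA A f u i)"
  unfolding lsc_def
proof (intro allI impI)
  fix u0 :: "'m^'k" and c :: real
  assume c: "c < distA A f u0 i"
  show "\<forall>\<^sub>F y in nhds u0. c < distA A f y i"
  proof (rule ccontr)
    assume "\<not> (\<forall>\<^sub>F y in nhds u0. c < distA A f y i)"
    then have "\<forall>d>0. \<exists>y. dist y u0 < d \<and> \<not> c < distA A f y i"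
      unfolding eventually_nhds_metric by blast
    then have "\<forall>n. \<exists>y. dist y u0 < inverse (real (Suc n)) \<and> \<not> c < distA A f y i"
      by simp
    then obtain Y where Y: "\<And>n. dist (Y n) u0 < inverse (real (Suc n))" "\<And>n. distA A f (Y n) i \<le> c"
      by (metis not_less)
    have "\<forall>n. \<exists>v. v \<in> Aset A f (Y n) i" using Aset_ne[OF sA] by blast
    then obtain V where V: "\<And>n. V n \<in> Aset A f (Y n) i" by metis
    have Vd: "dist (V n) (f$i) \<le> c" for n using Y(2)[of n] distA_eq[OF V[of n]] by simp
    have Vw: "V n \<in> wmean (A$i) (Y n)" for n using V[of n] unfolding Aset_def by auto
    have Ylim: "Y \<longlonglongrightarrow> u0"
    proof (subst tendsto_dist_iff, rule tendsto_sandwich[OF _ _ tendsto_const LIMSEQ_inverse_real_of_nat])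
      show "\<forall>\<^sub>F n in sequentially. 0 \<le> dist (Y n) u0" by simp
      show "\<forall>\<^sub>F n in sequentially. dist (Y n) u0 \<le> inverse (real (Suc n))"
        using Y(1) less_imp_le by (simp add: less_imp_le)
    qed
    define z :: 'm where "z = undefined"
    define R where "R = 1 + 2 * (\<Sum>j\<in>UNIV. \<bar>A$i$j\<bar> * (dist z (u0$j) + 1)) + 2 * (\<Sum>j\<in>UNIV. \<bar>A$i$j\<bar> * (dist z (u0$j) + 1)^2)"
    have VR: "V n \<in> cball z R" for n
    proof -
      have C: "dist z (Y n $ j) \<le> dist z (u0$j) + 1" for j
      proof -
        have "dist (Y n $ j) (u0 $ j) \<le> dist (Y n) u0" by (rule dist_vec_nth_le)
        also have "\<dots> < inverse (real (Suc n))" by (rule Y(1))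
        also have "\<dots> \<le> 1" by (simp add: field_simps)
        finally show ?thesis using dist_triangle[of z "Y n $ j" "u0 $ j"] by (simp add: dist_commute)
      qed
      have "phi (A$i) (Y n) (V n) \<le> phi (A$i) (Y n) z" using Vw[of n] unfolding wmean_phi by blast
      from bound[OF sA C this] show ?thesis unfolding R_def by (simp add: dist_commute)
    qed
    obtain l r where lr: "l \<in> cball z R" "strict_mono r" "(V \<circ> r) \<longlonglongrightarrow> l"
      using seq_compactE[OF compact_imp_seq_compact[OF compact_cball]] VR by metis
    have Yr: "(Y \<circ> r) \<longlonglongrightarrow> u0" using LIMSEQ_subseq_LIMSEQ[OF Ylim lr(2)] .
    have lw: "l \<in> wmean (A$i) u0"
      unfolding wmean_phi
    proof (intro CollectI allI)
      fix w
      have "(\<lambda>n. phi (A$i) ((Y \<circ> r) n) ((V \<circ> r) n)) \<longlonglongrightarrow> phi (A$i) u0 l"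
        by (rule phi_tendsto[OF Yr lr(3)])
      moreover have "(\<lambda>n. phi (A$i) ((Y \<circ> r) n) w) \<longlonglongrightarrow> phi (A$i) u0 w"
        by (rule phi_tendsto[OF Yr tendsto_const])
      moreover have "\<forall>\<^sub>F n in sequentially. phi (A$i) ((Y \<circ> r) n) ((V \<circ> r) n) \<le> phi (A$i) ((Y \<circ> r) n) w"
        using Vw unfolding wmean_phi by auto
      ultimately show "phi (A$i) u0 l \<le> phi (A$i) u0 w" using tendsto_le[OF trivial_limit_sequentially] by blast
    qed
    have ld: "dist l (f$i) \<le> c"
    proof (rule tendsto_le[OF trivial_limit_sequentially tendsto_const])
      show "(\<lambda>n. dist ((V \<circ> r) n) (f$i)) \<longlonglongrightarrow> dist l (f$i)" by (intro tendsto_intros lr(3))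
      show "\<forall>\<^sub>F n in sequentially. dist ((V \<circ> r) n) (f$i) \<le> c" using Vd by simp
    qed
    obtain w0 where w0: "w0 \<in> Aset A f u0 i" using Aset_ne[OF sA] by blast
    have "distA A f u0 i = dist w0 (f$i)" by (rule distA_eq[OF w0])
    also have "\<dots> \<le> dist l (f$i)" using w0 lw unfolding Aset_def by auto
    finally show False using ld c by linarith
  qed
qed

lemma lsc_powr:
  assumes "lsc g" "\<And>x. 0 \<le> g x" "0 < p"
  shows "lsc (\<lambda>x. g x powr p)"
  unfolding lsc_def
proof (intro allI impI)
  fix x c assume c: "c < g x powr p"
  show "\<forall>\<^sub>F y in nhds x. c < g y powr p"
  proof (cases "c < 0")
    case True then show ?thesis by (intro always_eventually allI) (smt (verit) powr_ge_zero)
  next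
    case False
    have "c powr (1/p) < (g x powr p) powr (1/p)"
      using False c assms(3) by (intro powr_less_mono2) auto
    also have "\<dots> = g x" using assms by (simp add: powr_powr)
    finally have "\<forall>\<^sub>F y in nhds x. c powr (1/p) < g y" using assms(1) unfolding lsc_def by blast
    then show ?thesis
    proof (rule eventually_mono)
      fix y assume "c powr (1/p) < g y"
      then have "(c powr (1/p)) powr p < g y powr p"
        using assms(3) False by (intro powr_less_mono2) auto
      then show "c < g y powr p" using False assms(3) by (simp add: powr_powr)
    qed
  qed
qed

lemma lsc_add:
  assumes "lsc g" "lsc h"
  shows "lsc (\<lambda>x. g x + h x)"
  unfolding lsc_def
proof (intro allI impI)
  fix x c assume c: "c < g x + h x"
  define e where "e = (g x + h x - c) / 2"
  have "g x - e < g x" "h x - e < h x" using c by (auto simp: e_def)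
  then have "\<forall>\<^sub>F y in nhds x. g x - e < g y" "\<forall>\<^sub>F y in nhds x. h x - e < h y"
    using assms unfolding lsc_def by blast+
  then show "\<forall>\<^sub>F y in nhds x. c < g y + h y"
    by (rule eventually_elim2) (simp add: e_def field_simps)
qed

lemma lsc_sum:
  assumes "\<And>i. i \<in> S \<Longrightarrow> lsc (g i)" "finite S"
  shows "lsc (\<lambda>x. \<Sum>i\<in>S. g i x)"
  using assms(2,1)
proof (induction S rule: finite_induct)
  case empty then show ?case by (simp add: lsc_def)
next
  case (insert a F)
  then show ?case by (simp add: lsc_add)
qed

theorem lemma3p3:
  fixes A :: "real^'k::finite^'n::finite" and f :: "('m::heine_borel)^'n" and p :: real
  assumes "connected (UNIV :: 'm set)"
    and "\<forall>i. (\<Sum>j\<in>UNIV. A$i$j) = 1"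
    and "1 \<le> p"
  shows "lsc (data_term A f p)"
proof -
  have "lsc (\<lambda>u. (distA A f u i) powr p)" for i
  proof (rule lsc_powr[OF lsc_distA])
    show "(\<Sum>j\<in>UNIV. A$i$j) = 1" using assms(2) by blast
    fix u
    obtain w where "w \<in> Aset A f u i" using Aset_ne assms(2) by blast
    then show "0 \<le> distA A f u i" using distA_eq by (metis zero_le_dist)
  qed (use assms(3) in auto)
  then have "lsc (\<lambda>u. \<Sum>i\<in>UNIV. (distA A f u i) powr p)" by (intro lsc_sum) auto
  then show ?thesis unfolding data_term_def[abs_def] .
qed

end
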